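(* Let $p,q$ be positive integers with $p+q$ odd, let $n\ge3$ be odd, and let $s$ be a nonempty finite sequence of elements of $\{p,q\}$. The permutation $x\mapsto A^{p,q}_n(x,s)$ of $\{p,q\}^n$ has exactly two orbits (cycles) of length $2^{\lceil n/2\rceil}$ if the length $|s|$ of $s$ is odd and the sum $\Sigma(s)$ of the entries of $s$ is odd; otherwise it has no orbits of length $2^{\lceil n/2\rceil}$.
   Context: Define $\mathrm{Opp}(p)=q$, $\mathrm{Opp}(q)=p$. For $x\in\{p,q\}$ and a finite sequence $s=(s_1,\dots,s_m)$ of positive integers, $RLD^{p,q}(x,s)$ is the sequence over $\{p,q\}$ consisting of $s_1$ copies of $x$, then $s_2$ copies of $\mathrm{Opp}(x)$, then $s_3$ copies of $x$, and so on alternately. For $n\ge1$ and $x=(x_1,\dots,x_n)\in\{p,q\}^n$: $RLD^{p,q}_1(x_1,s)=RLD^{p,q}(x_1,s)$ and $RLD^{p,q}_n(x_{1:n},s)=RLD^{p,q}(x_n, RLD^{p,q}_{n-1}(x_{1:n-1},s))$. For a nonempty sequence $t$ over $\{p,q\}$, $\mathrm{OppEnd}(t)=\mathrm{Opp}(\text{last entry of } t)$. The automaton $A^{p,q}_n$ has state set $\{p,q\}^n$; for a state $x$ and a nonempty finite sequence $s$ over $\{p,q\}$, $A^{p,q}_n(x,s)$ is the state whose $i$-th coordinate is $\mathrm{OppEnd}(RLD^{p,q}_i(x_{1:i},s))$, $i=1,\dots,n$. The map $x\mapsto A^{p,q}_n(x,s)$ is a permutation of $\{p,q\}^n$. *)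

theory Defs
  imports Complex_Main
begin

definition Opp :: "nat \<Rightarrow> nat \<Rightarrow> nat \<Rightarrow> nat" where
  "Opp p q y = (if y = p then q else p)"

definition RLD :: "nat \<Rightarrow> nat \<Rightarrow> nat \<Rightarrow> nat list \<Rightarrow> nat list" where
  "RLD p q x s =
     concat (map (\<lambda>i. replicate (s ! i) (if even i then x else Opp p q x)) [0..<length s])"

text \<open>RLD_n(x_{1:n}, s): RLD_1(x_1,s) = RLD(x_1,s), RLD_n = RLD(x_n, RLD_{n-1}(x_{1:n-1},s)).
  For the empty prefix this returns s itself (only used for prefixes of length at least 1).\<close>
definition RLDn :: "nat \<Rightarrow> nat \<Rightarrow> nat list \<Rightarrow> nat list \<Rightarrow> nat list" where
  "RLDn p q xs s = foldl (\<lambda>t y. RLD p q y t) s xs"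

definition OppEnd :: "nat \<Rightarrow> nat \<Rightarrow> nat list \<Rightarrow> nat" where
  "OppEnd p q t = Opp p q (last t)"

definition A :: "nat \<Rightarrow> nat \<Rightarrow> nat \<Rightarrow> nat list \<Rightarrow> nat list \<Rightarrow> nat list" where
  "A p q n s x = map (\<lambda>i. OppEnd p q (RLDn p q (take i x) s)) [1..<Suc n]"

definition states :: "nat \<Rightarrow> nat \<Rightarrow> nat \<Rightarrow> nat list set" where
  "states p q n = {x. length x = n \<and> set x \<subseteq> {p, q}}"

definition orbit_of :: "('a \<Rightarrow> 'a) \<Rightarrow> 'a \<Rightarrow> 'a set" where
  "orbit_of f x = range (\<lambda>k. (f ^^ k) x)"

definition num_orbits_of_length :: "('a \<Rightarrow> 'a) \<Rightarrow> 'a set \<Rightarrow> nat \<Rightarrow> nat" where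
  "num_orbits_of_length f X L = card {orbit_of f x | x. x \<in> X \<and> card (orbit_of f x) = L}"

end

theory Submission
  imports Defs
begin


fun R :: "nat \<Rightarrow> nat \<Rightarrow> nat \<Rightarrow> bool \<Rightarrow> nat list \<Rightarrow> nat list" where
  "R p q c b [] = []"
| "R p q c b (h#t) = replicate h (if b then Opp p q c else c) @ R p q c (\<not>b) t"

lemma R_snoc: "R p q c b (t@[h]) = R p q c b t @ replicate h (if b = even (length t) then Opp p q c else c)"
  by (induction t arbitrary: b) auto

lemma RLD_snoc: "RLD p q c (t@[h]) = RLD p q c t @ replicate h (if even (length t) then c else Opp p q c)"
  unfolding RLD_def by (auto simp: nth_append intro!: arg_cong[where f=concat] map_cong)

lemma RLD_R: "RLD p q c t = R p q c False t"
  by (induction t rule: rev_induct) (auto simp: RLD_snoc R_snoc, simp add: RLD_def)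

lemma R_append: "R p q c b (u@v) = R p q c b u @ R p q c (b = even (length u)) v"
proof (induction u arbitrary: b)
  case (Cons a u)
  have "((\<not>b) = even (length u)) = (b = even (length (a#u)))" by auto
  then show ?case using Cons.IH[of "\<not>b"] by simp
qed simp

lemma length_R: "length (R p q c b t) = sum_list t"
  by (induction t arbitrary: b) auto

lemma set_R: "set (R p q c b t) \<subseteq> {c, Opp p q c}"
  by (induction t arbitrary: b) auto

lemma Opp_in: "Opp p q c \<in> {p,q}" by (auto simp: Opp_def)

lemma Opp_Opp: "p \<noteq> q \<Longrightarrow> c \<in> {p,q} \<Longrightarrow> Opp p q (Opp p q c) = c"
  by (auto simp: Opp_def)

lemma Opp_neq: "p \<noteq> q \<Longrightarrow> Opp p q c \<noteq> c"
  by (auto simp: Opp_def)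

lemma Opp_sum: "c \<in> {p,q} \<Longrightarrow> p \<noteq> q \<Longrightarrow> c + Opp p q c = p + q"
  by (auto simp: Opp_def)

lemma R_Opp: "p \<noteq> q \<Longrightarrow> c \<in> {p,q} \<Longrightarrow> R p q c (\<not>b) t = R p q (Opp p q c) b t"
proof (induction t arbitrary: b)
  case (Cons h t)
  show ?case using Cons.IH[of "\<not>b"] Cons.prems by (simp add: Opp_Opp)
qed simp

lemma sum_R_pair: "p \<noteq> q \<Longrightarrow> c \<in> {p,q} \<Longrightarrow>
   sum_list (R p q c b t) + sum_list (R p q c (\<not>b) t) = (p+q) * sum_list t"
proof (induction t arbitrary: b)
  case Nil then show ?case by simp
next
  case (Cons h t)
  have "sum_list (R p q c b (h#t)) + sum_list (R p q c (\<not>b) (h#t))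
     = h * (c + Opp p q c) + (sum_list (R p q c (\<not>b) t) + sum_list (R p q c (\<not>\<not>b) t))"
    by (auto simp: algebra_simps sum_list_replicate)
  also have "\<dots> = (p+q) * sum_list (h#t)" using Cons by (simp add: Opp_sum algebra_simps)
  finally show ?case .
qed

lemma last_R: "\<forall>h\<in>set t. h > 0 \<Longrightarrow> t \<noteq> [] \<Longrightarrow>
   last (R p q c b t) = (if b = even (length t) then c else Opp p q c)"
proof (induction t rule: rev_induct)
  case Nil then show ?case by simp
next
  case (snoc h t)
  then show ?case by (auto simp: R_snoc)
qed

lemma length_RLD: "length (RLD p q c t) = sum_list t"
  by (simp add: RLD_R length_R)

lemma set_RLD: "c \<in> {p,q} \<Longrightarrow> set (RLD p q c t) \<subseteq> {p,q}"
  using set_R[of p q c False t] Opp_in[of p q c] by (auto simp: RLD_R)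

lemma RLD_append: "p \<noteq> q \<Longrightarrow> c \<in> {p,q} \<Longrightarrow>
  RLD p q c (u@v) = RLD p q c u @ RLD p q (if even (length u) then c else Opp p q c) v"
  using R_Opp[of p q c False v] by (auto simp: RLD_R R_append)

lemma RLD_Opp_sum: "p \<noteq> q \<Longrightarrow> c \<in> {p,q} \<Longrightarrow>
  sum_list (RLD p q c t) + sum_list (RLD p q (Opp p q c) t) = (p+q) * sum_list t"
  using sum_R_pair[of p q c False t] R_Opp[of p q c False t] by (simp add: RLD_R)

lemma last_RLD: "\<forall>h\<in>set t. h > 0 \<Longrightarrow> t \<noteq> [] \<Longrightarrow>
   last (RLD p q c t) = (if odd (length t) then c else Opp p q c)"
  by (simp add: RLD_R last_R)



definition good :: "nat \<Rightarrow> nat \<Rightarrow> nat list \<Rightarrow> bool" where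
  "good p q u \<longleftrightarrow> u \<noteq> [] \<and> set u \<subseteq> {p,q}"

definition nx :: "nat \<Rightarrow> nat \<Rightarrow> nat list \<Rightarrow> nat list \<Rightarrow> nat list" where
  "nx p q u y = A p q (length y) u y"

lemma RLDn_snoc: "RLDn p q (ys@[c]) u = RLD p q c (RLDn p q ys u)"
  by (simp add: RLDn_def)

lemma RLDn_Nil: "RLDn p q [] u = u"
  by (simp add: RLDn_def)

lemma RLDn_Cons: "RLDn p q (a#ys) u = RLDn p q ys (RLD p q a u)"
  by (simp add: RLDn_def)

lemma nx_Nil: "nx p q u [] = []"
  by (simp add: nx_def A_def)

lemma nx_snoc: "nx p q u (ys@[c]) = nx p q u ys @ [OppEnd p q (RLDn p q (ys@[c]) u)]"
proof -
  have "map (\<lambda>i. OppEnd p q (RLDn p q (take i (ys@[c])) u)) [1..<Suc (length ys)]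
      = map (\<lambda>i. OppEnd p q (RLDn p q (take i ys) u)) [1..<Suc (length ys)]"
    by (rule map_cong) auto
  then show ?thesis by (simp add: nx_def A_def)
qed

lemma length_nx: "length (nx p q u y) = length y"
  unfolding nx_def A_def by (simp, cases y, simp_all)

context
  fixes p q :: nat
  assumes pq: "p \<noteq> q" and pp: "0 < p" and qp: "0 < q"
begin

lemma sum_pos: "t \<noteq> [] \<Longrightarrow> set t \<subseteq> {p,q} \<Longrightarrow> sum_list t > 0"
  using pp qp by (cases t) auto

lemma good_RLD: "good p q u \<Longrightarrow> c \<in> {p,q} \<Longrightarrow> good p q (RLD p q c u)"
  unfolding good_def using set_RLD[of c p q u] sum_pos[of u]
  by (metis length_RLD length_greater_0_conv)

lemma good_RLDn: "good p q u \<Longrightarrow> set y \<subseteq> {p,q} \<Longrightarrow> good p q (RLDn p q y u)"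
  by (induction y rule: rev_induct) (auto simp: RLDn_snoc RLDn_Nil good_RLD)

lemma coord: "good p q u \<Longrightarrow> set ys \<subseteq> {p,q} \<Longrightarrow> c \<in> {p,q} \<Longrightarrow>
  OppEnd p q (RLDn p q (ys@[c]) u) = (if even (length (RLDn p q ys u)) then c else Opp p q c)"
proof -
  assume a: "good p q u" "set ys \<subseteq> {p,q}" "c \<in> {p,q}"
  have g: "good p q (RLDn p q ys u)" using good_RLDn a by auto
  then have "\<forall>h\<in>set (RLDn p q ys u). h > 0" using pp qp unfolding good_def by auto
  then show ?thesis using g a unfolding OppEnd_def RLDn_snoc
    by (simp add: last_RLD good_def Opp_Opp pq)
qed

lemma set_nx: "set (nx p q u y) \<subseteq> {p,q}"
  unfolding nx_def A_def OppEnd_def using Opp_in by auto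

lemma nx_snoc': "good p q u \<Longrightarrow> set ys \<subseteq> {p,q} \<Longrightarrow> c \<in> {p,q} \<Longrightarrow>
  nx p q u (ys@[c]) = nx p q u ys @ [if even (length (RLDn p q ys u)) then c else Opp p q c]"
  by (simp add: nx_snoc coord)

lemma RLDn_append: "good p q u \<Longrightarrow> set y \<subseteq> {p,q} \<Longrightarrow>
  RLDn p q y (u@v) = RLDn p q y u @ RLDn p q (nx p q u y) v"
proof (induction y rule: rev_induct)
  case Nil then show ?case by (simp add: RLDn_Nil nx_Nil)
next
  case (snoc c ys)
  have c: "c \<in> {p,q}" and ys: "set ys \<subseteq> {p,q}" using snoc.prems by auto
  have "RLDn p q (ys@[c]) (u@v) = RLD p q c (RLDn p q ys u @ RLDn p q (nx p q u ys) v)"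
    using snoc ys by (simp add: RLDn_snoc)
  also have "\<dots> = RLDn p q (ys@[c]) u @ RLDn p q (nx p q u (ys@[c])) v"
    using c ys snoc.prems(1) by (simp add: RLD_append pq RLDn_snoc nx_snoc')
  finally show ?case .
qed

lemma nx_compose: "good p q u \<Longrightarrow> good p q v \<Longrightarrow> set y \<subseteq> {p,q} \<Longrightarrow>
  nx p q (u@v) y = nx p q v (nx p q u y)"
proof (induction y rule: rev_induct)
  case Nil then show ?case by (simp add: nx_Nil)
next
  case (snoc c ys)
  have c: "c \<in> {p,q}" and ys: "set ys \<subseteq> {p,q}" using snoc.prems by auto
  have guv: "good p q (u@v)" using snoc.prems unfolding good_def by auto
  have sn: "set (nx p q u ys) \<subseteq> {p,q}" by (rule set_nx)
  have c1: "(if even (length (RLDn p q ys u)) then c else Opp p q c) \<in> {p,q}" using c Opp_in by auto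
  show ?case
    using snoc.IH[OF snoc.prems(1,2) ys] c ys guv snoc.prems(1,2) sn c1
    by (auto simp: nx_snoc' RLDn_append Opp_Opp pq)
qed

end


definition EE :: "nat \<Rightarrow> nat \<Rightarrow> nat \<Rightarrow> nat list \<Rightarrow> bool" where
  "EE p q j u \<longleftrightarrow> (\<forall>y. length y < j \<longrightarrow> set y \<subseteq> {p,q} \<longrightarrow> even (length (RLDn p q y u)))"

definition pw :: "nat list \<Rightarrow> nat \<Rightarrow> nat list" where
  "pw u k = concat (replicate k u)"

lemma pw_0: "pw u 0 = []" by (simp add: pw_def)
lemma pw_Suc: "pw u (Suc k) = u @ pw u k" by (simp add: pw_def)
lemma pw_1: "pw u 1 = u" by (simp add: pw_def)
lemma pw_1': "pw u (Suc 0) = u" by (simp add: pw_def)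
lemma pw_add: "pw u (a+b) = pw u a @ pw u b" by (simp add: pw_def replicate_add)
lemma pw_pow: "pw u (2^Suc m) = pw u (2^m) @ pw u (2^m)"
  using pw_add[of u "2^m" "2^m"] by (simp add: mult_2)
lemma pw_pow': "pw u (2*2^m) = pw u (2^m) @ pw u (2^m)"
  using pw_pow by simp
lemma pw_double: "pw (u@u) k = pw u (2*k)"
  by (induction k) (auto simp: pw_def)
lemma pw_Suc_right: "pw u (Suc k) = pw u k @ u"
  using pw_add[of u k 1] by (simp add: pw_1')

lemma RLDn_empty: "RLDn p q y [] = []"
  by (induction y rule: rev_induct) (auto simp: RLDn_Nil RLDn_snoc RLD_def)

lemma EE_0: "EE p q 0 u" by (simp add: EE_def)

context
  fixes p q :: nat
  assumes pq: "p \<noteq> q" and pp: "0 < p" and qp: "0 < q"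
begin

lemma good_pw: "good p q u \<Longrightarrow> k > 0 \<Longrightarrow> good p q (pw u k)"
  by (cases k) (auto simp: good_def pw_def)

lemma fixed: "EE p q j u \<Longrightarrow> good p q u \<Longrightarrow> length y \<le> j \<Longrightarrow> set y \<subseteq> {p,q} \<Longrightarrow> nx p q u y = y"
proof (induction y rule: rev_induct)
  case Nil then show ?case by (simp add: nx_Nil)
next
  case (snoc c ys)
  have "even (length (RLDn p q ys u))" using snoc.prems unfolding EE_def by auto
  then show ?case using snoc by (simp add: nx_snoc'[OF pq pp qp])
qed

lemma double: "good p q u \<Longrightarrow> EE p q j u \<Longrightarrow> EE p q (Suc j) (u@u)"
  unfolding EE_def
proof (intro allI impI)
  fix y :: "nat list"
  assume a: "good p q u" "\<forall>y. length y < j \<longrightarrow> set y \<subseteq> {p, q} \<longrightarrow> even (length (RLDn p q y u))"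
     "length y < Suc j" "set y \<subseteq> {p,q}"
  have "nx p q u y = y" using fixed a unfolding EE_def by auto
  then show "even (length (RLDn p q y (u@u)))"
    using a by (simp add: RLDn_append[OF pq pp qp])
qed

lemma nodouble: "good p q u \<Longrightarrow> EE p q j u \<Longrightarrow> EE p q (Suc j) (u@u) \<Longrightarrow> EE p q (Suc (Suc j)) (u@u)"
  unfolding EE_def
proof (intro allI impI)
  fix y :: "nat list"
  assume a: "good p q u" "\<forall>y. length y < j \<longrightarrow> set y \<subseteq> {p, q} \<longrightarrow> even (length (RLDn p q y u))"
     "\<forall>y. length y < Suc j \<longrightarrow> set y \<subseteq> {p, q} \<longrightarrow> even (length (RLDn p q y (u@u)))"
     "length y < Suc (Suc j)" "set y \<subseteq> {p,q}"
  show "even (length (RLDn p q y (u@u)))"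
  proof (cases "length y < Suc j")
    case True then show ?thesis using a by auto
  next
    case False
    then have "y \<noteq> []" by auto
    then obtain ys c where y: "y = ys @ [c]" by (metis rev_exhaust)
    have ly: "length ys \<le> j" using a y by auto
    have s: "set ys \<subseteq> {p,q}" using a y by auto
    have "nx p q u ys = ys" using fixed[of j u ys] a ly s unfolding EE_def by auto
    then show ?thesis using a s y by (simp add: RLDn_snoc length_RLD RLDn_append[OF pq pp qp])
  qed
qed

lemma chain: "good p q w \<Longrightarrow> EE p q j w \<Longrightarrow> EE p q (j + 2*m) (pw w (2^m))"
proof (induction m)
  case 0 then show ?case by (simp add: pw_1')
next
  case (Suc m)
  have g: "good p q (pw w (2^m))" using good_pw Suc by simp
  have e1: "EE p q (Suc (j+2*m)) (pw w (2^m) @ pw w (2^m))" using double[OF g] Suc by simp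
  have "EE p q (Suc (Suc (j+2*m))) (pw w (2^m) @ pw w (2^m))" using nodouble[OF g _ e1] Suc by simp
  then show ?case by (simp add: pw_pow')
qed

lemma RLDn_pw: "good p q u \<Longrightarrow> set y \<subseteq> {p,q} \<Longrightarrow> nx p q u y = y \<Longrightarrow>
   RLDn p q y (pw u k) = pw (RLDn p q y u) k"
proof (induction k)
  case 0 then show ?case
    by (simp add: pw_0 RLDn_empty)
next
  case (Suc k) then show ?case by (simp add: pw_Suc RLDn_append[OF pq pp qp])
qed

lemma EE_always: "good p q s \<Longrightarrow> EE p q (2*m) (pw s (2^m))"
  using chain[of s 0 m] EE_0 by simp

lemma EE_always': "good p q s \<Longrightarrow> EE p q (Suc (2*m)) (pw s (2^Suc m))"
  using double[OF good_pw[of s "2^m"] EE_always[of s m]] by (simp add: pw_pow')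

lemma EE_even: "good p q s \<Longrightarrow> even (length s) \<Longrightarrow> EE p q (Suc (2*m)) (pw s (2^m))"
proof -
  assume a: "good p q s" "even (length s)"
  have "EE p q 1 s" using a unfolding EE_def by (auto simp: RLDn_Nil)
  then show ?thesis using chain[OF a(1), of 1 m] by simp
qed

lemma EE3: "good p q s \<Longrightarrow> odd (length s) \<Longrightarrow> even (sum_list s) \<Longrightarrow> EE p q 3 (s@s)"
  unfolding EE_def
proof (intro allI impI)
  fix y :: "nat list"
  assume a: "good p q s" "odd (length s)" "even (sum_list s)" "length y < 3" "set y \<subseteq> {p,q}"
  have sR: "\<And>a. a \<in> {p,q} \<Longrightarrow> sum_list (RLD p q a (s@s)) = (p+q) * sum_list s"
  proof -
    fix a assume "a \<in> {p,q}"
    then show "sum_list (RLD p q a (s@s)) = (p+q) * sum_list s"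
      using a RLD_Opp_sum[OF pq, of a s] by (simp add: RLD_append[OF pq])
  qed
  consider "y = []" | a where "y = [a]" | a b where "y = [a,b]" using a(4)
    by (cases y; cases "tl y"; auto)
  then show "even (length (RLDn p q y (s@s)))"
  proof cases
    case 1 then show ?thesis by (simp add: RLDn_Nil)
  next
    case 2 then show ?thesis using a by (simp add: RLDn_def length_RLD)
  next
    case 3 then show ?thesis using a sR by (simp add: RLDn_def length_RLD)
  qed
qed

lemma EE_bad: "good p q s \<Longrightarrow> \<not> (odd (length s) \<and> odd (sum_list s)) \<Longrightarrow> r \<ge> 1 \<Longrightarrow>
   EE p q (Suc (2*r)) (pw s (2^r))"
proof -
  assume a: "good p q s" "\<not> (odd (length s) \<and> odd (sum_list s))" "r \<ge> 1"
  show ?thesis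
  proof (cases "even (length s)")
    case True then show ?thesis using EE_even a by simp
  next
    case False
    then have e3: "EE p q 3 (s@s)" using EE3 a by simp
    have g: "good p q (s@s)" using a by (simp add: good_def)
    obtain m where m: "r = Suc m" using a(3) by (cases r) auto
    have "EE p q (3 + 2*m) (pw (s@s) (2^m))" using chain[OF g e3] by simp
    then show ?thesis using m by (simp add: pw_double eval_nat_numeral)
  qed
qed

end


definition Y :: "nat \<Rightarrow> nat \<Rightarrow> nat \<Rightarrow> nat list \<Rightarrow> nat list set" where
  "Y p q r s = {y. length y = 2*r \<and> set y \<subseteq> {p,q} \<and> odd (length (RLDn p q y (pw s (2^r))))}"

lemma finite_Y: "finite (Y p q r s)"
proof -
  have "Y p q r s \<subseteq> {xs. set xs \<subseteq> {p,q} \<and> length xs = 2*r}" unfolding Y_def by auto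
  then show ?thesis using finite_lists_length_eq[of "{p,q}" "2*r"] finite_subset by blast
qed

context
  fixes p q :: nat
  assumes pq: "p \<noteq> q" and pp: "0 < p" and qp: "0 < q" and pqo: "odd (p+q)"
begin

lemma Opp_p: "Opp p q p = q" by (simp add: Opp_def)
lemma Opp_q: "Opp p q q = p" using pq by (simp add: Opp_def)

lemma sR: "a \<in> {p,q} \<Longrightarrow> odd (length s) \<Longrightarrow> sum_list (RLD p q a (s@s)) = (p+q) * sum_list s"
  using RLD_Opp_sum[OF pq, of a s] by (simp add: RLD_append[OF pq])

lemma keyR: "good p q s \<Longrightarrow> a \<in> {p,q} \<Longrightarrow> b \<in> {p,q} \<Longrightarrow>
  RLDn p q (a#b#z) (pw s (2^Suc r)) = RLDn p q z (pw (RLDn p q [a,b] (s@s)) (2^r))"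
proof -
  assume a: "good p q s" "a \<in> {p,q}" "b \<in> {p,q}"
  have g: "good p q (s@s)" using a by (simp add: good_def)
  have "pw s 2 = s@s" by (simp add: pw_def numeral_2_eq_2)
  then have e: "EE p q 2 (s@s)" using EE_always[OF pq pp qp a(1), of 1] by simp
  have f: "nx p q (s@s) [a,b] = [a,b]" using fixed[OF pq pp qp e g] a by simp
  have "RLDn p q (a#b#z) (pw s (2^Suc r)) = RLDn p q z (RLDn p q [a,b] (pw (s@s) (2^r)))"
    by (simp add: RLDn_Cons RLDn_Nil pw_double)
  also have "\<dots> = RLDn p q z (pw (RLDn p q [a,b] (s@s)) (2^r))"
    using RLDn_pw[OF pq pp qp g _ f] a by simp
  finally show ?thesis .
qed

lemma Y_step: "good p q s \<Longrightarrow>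
  Y p q (Suc r) s = (\<lambda>(a,b,z). a#b#z) ` (SIGMA a:{p,q}. SIGMA b:{p,q}. Y p q r (RLDn p q [a,b] (s@s)))"
proof (intro set_eqI iffI)
  fix y assume g: "good p q s" and y: "y \<in> Y p q (Suc r) s"
  then have "length y = Suc (Suc (2*r))" unfolding Y_def by simp
  then obtain a b z where yz: "y = a#b#z" by (metis Suc_length_conv)
  have ab: "a \<in> {p,q}" "b \<in> {p,q}" using y yz unfolding Y_def by auto
  have "z \<in> Y p q r (RLDn p q [a,b] (s@s))"
    using y yz keyR[OF g ab, of z r] unfolding Y_def by auto
  then show "y \<in> (\<lambda>(a,b,z). a#b#z) ` (SIGMA a:{p,q}. SIGMA b:{p,q}. Y p q r (RLDn p q [a,b] (s@s)))"
    using ab yz by (intro image_eqI[where x="(a,b,z)"]) auto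
next
  fix y assume g: "good p q s" and
    y: "y \<in> (\<lambda>(a,b,z). a#b#z) ` (SIGMA a:{p,q}. SIGMA b:{p,q}. Y p q r (RLDn p q [a,b] (s@s)))"
  then obtain a b z where yz: "y = a#b#z" and ab: "a \<in> {p,q}" "b \<in> {p,q}"
     and z: "z \<in> Y p q r (RLDn p q [a,b] (s@s))" by auto
  show "y \<in> Y p q (Suc r) s"
    using z yz ab keyR[OF g ab, of z r] unfolding Y_def by auto
qed

lemma card_Y_step: "good p q s \<Longrightarrow>
  card (Y p q (Suc r) s) = (\<Sum>a\<in>{p,q}. \<Sum>b\<in>{p,q}. card (Y p q r (RLDn p q [a,b] (s@s))))"
proof -
  assume g: "good p q s"
  have inj: "inj_on (\<lambda>(a,b,z). a#b#(z::nat list)) X" for X by (auto simp: inj_on_def)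
  have "card (Y p q (Suc r) s) = card (SIGMA a:{p,q}. SIGMA b:{p,q}. Y p q r (RLDn p q [a,b] (s@s)))"
    using Y_step[OF g] card_image[OF inj] by simp
  also have "\<dots> = (\<Sum>a\<in>{p,q}. card (SIGMA b:{p,q}. Y p q r (RLDn p q [a,b] (s@s))))"
    by (rule card_SigmaI) (auto simp: finite_Y)
  also have "\<dots> = (\<Sum>a\<in>{p,q}. \<Sum>b\<in>{p,q}. card (Y p q r (RLDn p q [a,b] (s@s))))"
    by (intro sum.cong refl card_SigmaI) (auto simp: finite_Y)
  finally show ?thesis .
qed

end


context
  fixes p q :: nat
  assumes pq: "p \<noteq> q" and pp: "0 < p" and qp: "0 < q" and pqo: "odd (p+q)"
begin

lemma sp_facts:
  assumes g: "good p q s" and ls: "odd (length s)" and ss: "odd (sum_list s)" and a: "a \<in> {p,q}"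
  shows "odd (length (RLDn p q [a,b] (s@s)))"
    and "odd (sum_list (RLDn p q [a,p] (s@s)) + sum_list (RLDn p q [a,q] (s@s)))"
proof -
  show "odd (length (RLDn p q [a,b] (s@s)))"
    using sR[OF pq pp qp pqo a ls] pqo ss by (simp add: RLDn_def length_RLD)
  define v where "v = RLD p q a s"
  define v' where "v' = RLD p q (Opp p q a) s"
  have lv: "odd (length v)" using ss by (simp add: v_def length_RLD)
  have e: "RLD p q a (s@s) = v @ v'" using ls using a by (simp add: RLD_append[OF pq a] v_def v'_def)
  have sv: "sum_list v + sum_list v' = (p+q) * sum_list s"
    using RLD_Opp_sum[OF pq a] by (simp add: v_def v'_def)
  have r: "RLDn p q [a,b] (s@s) = RLD p q b v @ RLD p q (Opp p q b) v'" if "b \<in> {p,q}" for b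
    using e lv that by (simp add: RLDn_def RLD_append[OF pq])
  have "sum_list (RLDn p q [a,p] (s@s)) + sum_list (RLDn p q [a,q] (s@s))
     = (sum_list (RLD p q p v) + sum_list (RLD p q (Opp p q p) v)) +
       (sum_list (RLD p q p v') + sum_list (RLD p q (Opp p q p) v'))"
    using r[of p] r[of q] pq by (simp add: Opp_def)
  also have "\<dots> = (p+q) * (sum_list v + sum_list v')"
    using RLD_Opp_sum[OF pq, of p] by (simp add: algebra_simps)
  also have "\<dots> = (p+q)*(p+q)*sum_list s" using sv by simp
  finally show "odd (sum_list (RLDn p q [a,p] (s@s)) + sum_list (RLDn p q [a,q] (s@s)))"
    using pqo ss by simp
qed

lemma Y0: "odd (length t) \<Longrightarrow> card (Y p q 0 t) = 1"
proof -
  assume "odd (length t)"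
  then have "Y p q 0 t = {[]}" unfolding Y_def by (auto simp: RLDn_Nil pw_1')
  then show ?thesis by simp
qed

lemma Ycard: "r \<ge> 1 \<Longrightarrow> good p q s \<Longrightarrow>
  card (Y p q r s) = (if odd (length s) \<and> odd (sum_list s) then 2^Suc r else 0)"
proof (induction r arbitrary: s rule: nat_induct_at_least)
  case base
  show ?case
  proof (cases "odd (length s) \<and> odd (sum_list s)")
    case False
    have "EE p q 3 (pw s 2)" using EE_bad[OF pq pp qp base.prems False, of 1] by simp
    then have "Y p q 1 s = {}" unfolding Y_def EE_def by auto
    then show ?thesis using False by simp
  next
    case True
    have "card (Y p q 1 s) = (\<Sum>a\<in>{p,q}. \<Sum>b\<in>{p,q}. card (Y p q 0 (RLDn p q [a,b] (s@s))))"
      using card_Y_step[OF pq pp qp pqo base.prems, of 0] by simp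
    also have "\<dots> = (\<Sum>a\<in>{p,q}. \<Sum>b\<in>{p,q}. (1::nat))"
      by (intro sum.cong refl Y0) (use sp_facts[OF base.prems] True in auto)
    also have "\<dots> = 4" using pq by simp
    finally show ?thesis using True by simp
  qed
next
  case (Suc r)
  show ?case
  proof (cases "odd (length s) \<and> odd (sum_list s)")
    case False
    have "EE p q (Suc (2 * Suc r)) (pw s (2^Suc r))" using EE_bad[OF pq pp qp Suc.prems False, of "Suc r"] by simp
    then have "Y p q (Suc r) s = {}" unfolding Y_def EE_def by auto
    then show ?thesis using False by simp
  next
    case True
    let ?sp = "\<lambda>a b. RLDn p q [a,b] (s@s)"
    have gs: "good p q (?sp a b)" if "a \<in> {p,q}" "b \<in> {p,q}" for a b
      using good_RLDn[OF pq pp qp, of "s@s" "[a,b]"] Suc.prems that by (auto simp: good_def)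
    have "card (Y p q (Suc r) s) = (\<Sum>a\<in>{p,q}. \<Sum>b\<in>{p,q}. card (Y p q r (?sp a b)))"
      using card_Y_step[OF pq pp qp pqo Suc.prems] by simp
    also have "\<dots> = (\<Sum>a\<in>{p,q}. \<Sum>b\<in>{p,q}. (if odd (sum_list (?sp a b)) then 2^Suc r else 0))"
      by (intro sum.cong refl) (use Suc.IH gs sp_facts[OF Suc.prems] True in auto)
    also have "\<dots> = (\<Sum>a\<in>{p,q}. (2::nat)^Suc r)"
    proof (intro sum.cong refl)
      fix a assume a: "a \<in> {p,q}"
      have "odd (sum_list (?sp a p) + sum_list (?sp a q))" using sp_facts(2)[OF Suc.prems _ _ a] True by auto
      then show "(\<Sum>b\<in>{p,q}. (if odd (sum_list (?sp a b)) then (2::nat)^Suc r else 0)) = 2^Suc r"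
        using pq by auto
    qed
    also have "\<dots> = 2^Suc (Suc r)" using pq by simp
    finally show ?thesis using True by simp
  qed
qed

end


lemma dvd_pow2: "(g::nat) dvd 2^k \<Longrightarrow> \<exists>e\<le>k. g = 2^e"
proof (induction k arbitrary: g)
  case 0 then show ?case by simp
next
  case (Suc k)
  show ?case
  proof (cases "even g")
    case True
    then obtain h where h: "g = 2*h" by blast
    then have "h dvd 2^k" using Suc.prems by simp
    then obtain e where "e \<le> k" "h = 2^e" using Suc.IH by blast
    then show ?thesis using h by (intro exI[of _ "Suc e"]) auto
  next
    case False
    then have "coprime g 2" by simp
    then have "g dvd 2^k" using Suc.prems by (simp add: coprime_dvd_mult_right_iff)
    then show ?thesis using Suc.IH by (meson le_SucI)
  qed
qed

lemma fa: "(f^^a) ((f^^b) x) = (f^^(a+b)) x"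
  by (simp add: funpow_add)

lemma funpow_mult_fix: "(f^^K) x = x \<Longrightarrow> (f^^(K*j)) x = x"
  by (induction j) (auto simp: funpow_add)

lemma funpow_mod: "(f^^K) x = x \<Longrightarrow> (f^^k) x = (f^^(k mod K)) x"
proof -
  assume a: "(f^^K) x = x"
  have "(f^^k) x = (f^^(k mod K + K*(k div K))) x" by simp
  also have "\<dots> = (f^^(k mod K)) ((f^^(K*(k div K))) x)" by (simp only: fa)
  also have "\<dots> = (f^^(k mod K)) x" using funpow_mult_fix[OF a] by simp
  finally show ?thesis .
qed

lemma funpow_gcd: "(f^^a) x = x \<Longrightarrow> (f^^b) x = x \<Longrightarrow> (f^^(gcd a b)) x = x"
proof (induction a b rule: gcd_nat_induct)
  case (base m) then show ?case by simp
next
  case (step m n)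
  have "(f^^(m mod n)) x = x" using funpow_mod[OF step.prems(2), where k=m] step.prems(1) by simp
  then show ?case using step gcd_red_nat[of m n] by simp
qed

lemma orbit_range: "K > 0 \<Longrightarrow> (f^^K) x = x \<Longrightarrow> orbit_of f x = (\<lambda>k. (f^^k) x) ` {..<K}"
  unfolding orbit_of_def
proof (intro set_eqI iffI)
  fix y assume K: "K > 0" "(f^^K) x = x" and "y \<in> range (\<lambda>k. (f ^^ k) x)"
  then obtain k where k: "y = (f^^k) x" by auto
  then have "y = (f^^(k mod K)) x" using funpow_mod[where f=f and K=K and x=x and k=k, OF K(2)] by simp
  moreover have "k mod K \<in> {..<K}" using K by simp
  ultimately show "y \<in> (\<lambda>k. (f^^k) x) ` {..<K}" by (rule image_eqI)
qed auto

lemma orbit_card_le: "K > 0 \<Longrightarrow> (f^^K) x = x \<Longrightarrow> card (orbit_of f x) \<le> K"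
  using orbit_range[where f=f and K=K and x=x] card_image_le[of "{..<K}"] by simp

lemma orbit_finite: "K > 0 \<Longrightarrow> (f^^K) x = x \<Longrightarrow> finite (orbit_of f x)"
  using orbit_range[where f=f and K=K and x=x] by simp

lemma orbit_card_eq:
  assumes M: "(f^^(2^Suc r)) x = x" and K: "(f^^(2^r)) x \<noteq> x"
  shows "card (orbit_of f x) = 2^Suc r"
proof -
  let ?M = "(2::nat)^Suc r"
  have inj: "inj_on (\<lambda>k. (f^^k) x) {..<?M}"
  proof (rule ccontr)
    assume "\<not> inj_on (\<lambda>k. (f^^k) x) {..<?M}"
    then obtain a b where ab: "a < ?M" "b < ?M" "a \<noteq> b" "(f^^a) x = (f^^b) x"
      unfolding inj_on_def by auto
    obtain i j where ij: "i < j" "j < ?M" "(f^^i) x = (f^^j) x"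
    proof (cases "a < b")
      case True then show ?thesis using that ab by blast
    next
      case False then have "b < a" using ab(3) by simp
      then show ?thesis using that[of b a] ab by simp
    qed
    define d where "d = ?M - j + i"
    have "(f^^d) x = (f^^(?M - j)) ((f^^i) x)" by (simp add: d_def funpow_add)
    also have "\<dots> = (f^^(?M - j)) ((f^^j) x)" using ij by simp
    also have "\<dots> = (f^^?M) x" using ij(2) by (simp only: fa) simp
    finally have fd: "(f^^d) x = x" using M by simp
    have d0: "0 < d" "d < ?M" using ij by (auto simp: d_def)
    have fg: "(f^^(gcd d ?M)) x = x" using funpow_gcd[OF fd M] .
    have "gcd d ?M dvd ?M" by simp
    then obtain e where e: "e \<le> Suc r" "gcd d ?M = 2^e" using dvd_pow2 by blast
    have "gcd d ?M \<le> d" using d0 by (simp add: gcd_le1_nat)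
    then have "(2::nat)^e < 2^Suc r" using e d0 by linarith
    then have "e < Suc r" using power_less_imp_less_exp[of "2::nat" e "Suc r"] by simp
    then have "e \<le> r" by simp
    then have "gcd d ?M dvd 2^r" using e by (simp add: le_imp_power_dvd)
    then obtain c where c: "2^r = gcd d ?M * c" by blast
    have "(f^^(gcd d ?M * c)) x = x" by (rule funpow_mult_fix[OF fg])
    then have "(f^^(2^r)) x = x" by (simp only: c)
    then show False using K by simp
  qed
  have o: "orbit_of f x = (\<lambda>k. (f^^k) x) ` {..<?M}"
    by (rule orbit_range[where f=f and K="?M" and x=x, OF _ M]) simp
  show ?thesis unfolding o using card_image[OF inj] by (simp only: card_lessThan)
qed

lemma orbit_mem_eq:
  assumes M: "M > 0" "\<forall>x\<in>X. (f^^M) x = x" and X: "\<forall>x\<in>X. f x \<in> X" and x: "x \<in> X"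
    and y: "y \<in> orbit_of f x"
  shows "orbit_of f y = orbit_of f x" "y \<in> X"
proof -
  have pX: "(f^^k) z \<in> X" if "z \<in> X" for k z using that X by (induction k) auto
  obtain i where i: "y = (f^^i) x" using y unfolding orbit_of_def by auto
  show "y \<in> X" using pX x i by simp
  have e1: "(f^^(M*i - i)) y = (f^^(M*i - i + i)) x" unfolding i by (rule fa)
  have e2: "M*i - i + i = M*i" using M(1) by simp
  have e3: "(f^^(M*i)) x = x" by (rule funpow_mult_fix[OF M(2)[rule_format, OF x]])
  have xe: "x = (f^^(M*i - i)) y" using e1 e2 e3 by simp
  have h: "(f^^k) x = (f^^(k + (M*i - i))) y" for k
  proof -
    have "(f^^k) x = (f^^k) ((f^^(M*i - i)) y)" using xe by (rule arg_cong)
    also have "\<dots> = (f^^(k + (M*i - i))) y" by (rule fa)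
    finally show ?thesis .
  qed
  have h2: "(f^^k) y = (f^^(k+i)) x" for k using i by (simp only: fa)
  show "orbit_of f y = orbit_of f x"
    unfolding orbit_of_def
  proof (intro set_eqI iffI)
    fix z assume "z \<in> range (\<lambda>k. (f ^^ k) y)"
    then obtain k where "z = (f^^k) y" by auto
    then have "z = (f^^(k+i)) x" using h2[of k] by (rule trans)
    then show "z \<in> range (\<lambda>k. (f ^^ k) x)" by (rule range_eqI)
  next
    fix z assume "z \<in> range (\<lambda>k. (f ^^ k) x)"
    then obtain k where "z = (f^^k) x" by auto
    then have "z = (f^^(k + (M*i - i))) y" using h[of k] by (rule trans)
    then show "z \<in> range (\<lambda>k. (f ^^ k) y)" by (rule range_eqI)
  qed
qed



lemma ceil_half: "nat \<lceil>real (Suc (2*r)) / 2\<rceil> = Suc r"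
proof -
  have "real (Suc (2*r)) / 2 = real r + 1/2" by simp
  then have "\<lceil>real (Suc (2*r)) / 2\<rceil> = int r + 1"
    by (simp add: ceiling_eq_iff)
  then show ?thesis by simp
qed

lemma orbit_count:
  assumes fin: "finite X" and fX: "\<forall>x\<in>X. f x \<in> X"
    and fM: "\<forall>x\<in>X. (f^^(2^Suc r)) x = x"
  shows "card {orbit_of f x | x. x \<in> X \<and> card (orbit_of f x) = 2^Suc r} * 2^Suc r
         = card {x\<in>X. (f^^(2^r)) x \<noteq> x}"
proof -
  let ?M = "(2::nat)^Suc r"
  let ?S = "{x\<in>X. (f^^(2^r)) x \<noteq> x}"
  have cM: "card (orbit_of f x) = ?M \<longleftrightarrow> x \<in> ?S" if x: "x \<in> X" for x
  proof
    assume c: "card (orbit_of f x) = ?M"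
    show "x \<in> ?S"
    proof (rule ccontr)
      assume "x \<notin> ?S"
      then have "(f^^(2^r)) x = x" using x by simp
      then have "card (orbit_of f x) \<le> 2^r" by (intro orbit_card_le) simp_all
      then show False using c by simp
    qed
  next
    assume "x \<in> ?S"
    then show "card (orbit_of f x) = ?M" using orbit_card_eq[where f=f and r=r and x=x] fM x by simp
  qed
  have eqC: "{orbit_of f x | x. x \<in> X \<and> card (orbit_of f x) = ?M} = orbit_of f ` ?S"
  proof (intro set_eqI iffI)
    fix Ob assume "Ob \<in> {orbit_of f x | x. x \<in> X \<and> card (orbit_of f x) = ?M}"
    then obtain x where "Ob = orbit_of f x" "x \<in> X" "card (orbit_of f x) = ?M" by blast
    then show "Ob \<in> orbit_of f ` ?S" using cM by blast
  next
    fix Ob assume "Ob \<in> orbit_of f ` ?S"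
    then obtain x where "Ob = orbit_of f x" "x \<in> ?S" by blast
    then show "Ob \<in> {orbit_of f x | x. x \<in> X \<and> card (orbit_of f x) = ?M}" using cM by blast
  qed
  have mem: "orbit_of f y = orbit_of f x" "y \<in> X" if "x \<in> X" "y \<in> orbit_of f x" for x y
  proof -
    have "0 < ?M" by simp
    from orbit_mem_eq[where M="?M" and X=X and f=f and x=x and y=y, OF this fM fX that]
    show "orbit_of f y = orbit_of f x" "y \<in> X" by blast+
  qed
  have finO: "finite (orbit_of f x)" if "x \<in> X" for x
    using orbit_finite[where K="?M" and f=f and x=x] fM that by simp
  have U: "\<Union> (orbit_of f ` ?S) = ?S"
  proof (intro set_eqI iffI)
    fix z assume "z \<in> \<Union> (orbit_of f ` ?S)"
    then obtain x where x: "x \<in> ?S" "z \<in> orbit_of f x" by auto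
    have xX: "x \<in> X" using x(1) by simp
    have e: "orbit_of f z = orbit_of f x" by (rule mem(1)[OF xX x(2)])
    have zX: "z \<in> X" by (rule mem(2)[OF xX x(2)])
    have "card (orbit_of f x) = ?M" using cM[OF xX] x(1) by blast
    then have "card (orbit_of f z) = ?M" using e by simp
    then show "z \<in> ?S" using cM[OF zX] by blast
  next
    fix z assume "z \<in> ?S"
    moreover have "z \<in> orbit_of f z" unfolding orbit_of_def by (metis funpow_0 rangeI)
    ultimately show "z \<in> \<Union> (orbit_of f ` ?S)" by auto
  qed
  have disj: "pairwise disjnt (orbit_of f ` ?S)"
    unfolding pairwise_def disjnt_def
  proof (intro ballI impI)
    fix A B assume A: "A \<in> orbit_of f ` ?S" and B: "B \<in> orbit_of f ` ?S" and ne: "A \<noteq> B"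
    obtain a where a: "A = orbit_of f a" "a \<in> ?S" using A by blast
    obtain b where b: "B = orbit_of f b" "b \<in> ?S" using B by blast
    show "A \<inter> B = {}"
    proof (rule ccontr)
      assume "A \<inter> B \<noteq> {}"
      then obtain z where z: "z \<in> A" "z \<in> B" by blast
      have "orbit_of f z = orbit_of f a" by (rule mem(1)) (use a z in auto)
      moreover have "orbit_of f z = orbit_of f b" by (rule mem(1)) (use b z in auto)
      ultimately show False using ne a b by simp
    qed
  qed
  have "card ?S = sum card (orbit_of f ` ?S)"
  proof -
    have "card (\<Union> (orbit_of f ` ?S)) = sum card (orbit_of f ` ?S)"
      by (rule card_Union_disjoint[OF disj]) (use finO in blast)
    then show ?thesis using U by simp
  qed
  also have "\<dots> = sum (\<lambda>_. ?M) (orbit_of f ` ?S)"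
  proof (rule sum.cong)
    fix Ob assume "Ob \<in> orbit_of f ` ?S"
    then obtain x where x: "Ob = orbit_of f x" "x \<in> ?S" by blast
    then show "card Ob = ?M" using cM[of x] by blast
  qed simp
  also have "\<dots> = card (orbit_of f ` ?S) * ?M" by simp
  finally show ?thesis using eqC by simp
qed



theorem theorem3:
  fixes p q n :: nat and s :: "nat list"
  assumes "p > 0" and "q > 0" and "odd (p + q)"
    and "odd n" and "n \<ge> 3"
    and "s \<noteq> []" and "set s \<subseteq> {p, q}"
  shows "num_orbits_of_length (A p q n s) (states p q n) (2 ^ nat \<lceil>real n / 2\<rceil>) =
           (if odd (length s) \<and> odd (sum_list s) then 2 else 0)"
proof -
  have pp: "0 < p" and qp: "0 < q" and pqo: "odd (p+q)" using assms by auto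
  have pq: "p \<noteq> q" using pqo by auto
  obtain r where n: "n = Suc (2*r)" using assms(4) oddE by (metis Suc_eq_plus1)
  have r1: "r \<ge> 1" using assms(5) n by simp
  have g: "good p q s" using assms(6,7) by (simp add: good_def)
  let ?f = "A p q n s"
  let ?X = "states p q n"
  let ?M = "(2::nat)^Suc r"
  let ?K = "(2::nat)^r"
  have Anx: "A p q n u x = nx p q u x" if "x \<in> ?X" for u x
    using that by (simp add: nx_def states_def)
  have Xi: "length x = n" "set x \<subseteq> {p,q}" if "x \<in> ?X" for x
    using that by (auto simp: states_def)
  have fX: "\<forall>x\<in>?X. ?f x \<in> ?X"
  proof
    fix x assume x: "x \<in> ?X"
    have e: "?f x = nx p q s x" by (rule Anx[OF x])
    have "length (nx p q s x) = n" using length_nx[of p q s x] Xi[OF x] by simp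
    moreover have "set (nx p q s x) \<subseteq> {p,q}" by (rule set_nx[OF pq pp qp])
    ultimately show "?f x \<in> ?X" using e by (simp add: states_def)
  qed
  have fpow: "(?f^^Suc k) x = nx p q (pw s (Suc k)) x" if "x \<in> ?X" for k x
    using that
  proof (induction k arbitrary: x)
    case 0 then show ?case using Anx by (simp add: pw_1')
  next
    case (Suc k)
    have fx: "?f x \<in> ?X" using fX Suc.prems by blast
    have "(?f^^Suc (Suc k)) x = (?f^^Suc k) (?f x)" by (simp only: funpow_Suc_right comp_def)
    also have "\<dots> = nx p q (pw s (Suc k)) (nx p q s x)" using Suc.IH[OF fx] Anx[OF Suc.prems] by simp
    also have "\<dots> = nx p q (s @ pw s (Suc k)) x"
      using nx_compose[OF pq pp qp g good_pw[OF pq pp qp g, of "Suc k"]] Xi[OF Suc.prems] by simp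
    finally show ?case by (simp add: pw_Suc)
  qed
  have fpow': "(?f^^k) x = nx p q (pw s k) x" if "x \<in> ?X" "k > 0" for k x
    using fpow[OF that(1), of "k - 1"] that(2) by simp
  have fM: "\<forall>x\<in>?X. (?f^^?M) x = x"
  proof
    fix x assume x: "x \<in> ?X"
    have "EE p q (Suc (2*r)) (pw s ?M)" by (rule EE_always'[OF pq pp qp g])
    then have "nx p q (pw s ?M) x = x"
      using fixed[OF pq pp qp _ good_pw[OF pq pp qp g]] Xi[OF x] n by simp
    then show "(?f^^?M) x = x" using fpow'[OF x] by simp
  qed
  define S where "S = {x\<in>?X. (?f^^?K) x \<noteq> x}"
  have finX: "finite ?X"
  proof -
    have "?X \<subseteq> {xs. set xs \<subseteq> {p,q} \<and> length xs = n}" by (auto simp: states_def)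
    then show ?thesis using finite_lists_length_eq[of "{p,q}" n] finite_subset by blast
  qed
  have cnt: "num_orbits_of_length ?f ?X ?M * ?M = card S"
    unfolding num_orbits_of_length_def S_def using orbit_count[OF finX fX fM] by simp
  have Sx: "x \<in> S \<longleftrightarrow> x \<in> ?X \<and> odd (length (RLDn p q (take (2*r) x) (pw s ?K)))" for x
  proof (cases "x \<in> ?X")
    case False then show ?thesis by (simp add: S_def)
  next
    case True
    have lx: "length x = Suc (2*r)" using Xi[OF True] n by simp
    then obtain ys c where x: "x = ys @ [c]" by (metis length_Suc_conv_rev)
    have ys: "length ys = 2*r" "set ys \<subseteq> {p,q}" "c \<in> {p,q}" using Xi[OF True] x lx by auto
    have tk: "take (2*r) x = ys" using x ys by simp
    have gK: "good p q (pw s ?K)" using good_pw[OF pq pp qp g] by simp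
    have EK: "EE p q (2*r) (pw s ?K)" by (rule EE_always[OF pq pp qp g])
    have fy: "nx p q (pw s ?K) ys = ys" using fixed[OF pq pp qp EK gK] ys by simp
    have "(?f^^?K) x = nx p q (pw s ?K) x" using fpow'[OF True] by simp
    also have "\<dots> = ys @ [if even (length (RLDn p q ys (pw s ?K))) then c else Opp p q c]"
      using nx_snoc'[OF pq pp qp gK ys(2,3)] fy x by simp
    finally have "(?f^^?K) x = ys @ [if even (length (RLDn p q ys (pw s ?K))) then c else Opp p q c]" .
    then have "((?f^^?K) x = x) \<longleftrightarrow> even (length (RLDn p q ys (pw s ?K)))"
      using x Opp_neq[OF pq, of c] by auto
    then show ?thesis using True tk by (simp add: S_def)
  qed
  have Seq: "S = (\<lambda>(y,c). y @ [c]) ` (Y p q r s \<times> {p,q})"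
  proof (intro set_eqI iffI)
    fix x assume "x \<in> S"
    then have x: "x \<in> ?X" "odd (length (RLDn p q (take (2*r) x) (pw s ?K)))" using Sx by auto
    have lx: "length x = Suc (2*r)" using Xi[OF x(1)] n by simp
    then obtain ys c where xe: "x = ys @ [c]" by (metis length_Suc_conv_rev)
    have "ys \<in> Y p q r s" "c \<in> {p,q}" using x xe lx Xi[OF x(1)] by (auto simp: Y_def)
    then show "x \<in> (\<lambda>(y,c). y @ [c]) ` (Y p q r s \<times> {p,q})" using xe by force
  next
    fix x assume "x \<in> (\<lambda>(y,c). y @ [c]) ` (Y p q r s \<times> {p,q})"
    then obtain ys c where xe: "x = ys @ [c]" and ys: "ys \<in> Y p q r s" "c \<in> {p,q}" by auto
    have "x \<in> ?X" using xe ys n by (auto simp: Y_def states_def)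
    then show "x \<in> S" using Sx xe ys by (auto simp: Y_def)
  qed
  have inj: "inj_on (\<lambda>(y,c). y @ [c::nat]) Z" for Z by (auto simp: inj_on_def)
  have cS: "card S = card (Y p q r s) * 2"
  proof -
    have "card S = card (Y p q r s \<times> {p,q})" unfolding Seq by (rule card_image[OF inj])
    also have "\<dots> = card (Y p q r s) * card {p,q}" by (rule card_cartesian_product)
    finally show ?thesis using pq by simp
  qed
  have cY: "card (Y p q r s) = (if odd (length s) \<and> odd (sum_list s) then ?M else 0)"
    by (rule Ycard[OF pq pp qp pqo r1 g])
  have e2: "(2::nat) ^ nat \<lceil>real n / 2\<rceil> = ?M" using n ceil_half by simp
  define N where "N = num_orbits_of_length ?f ?X ?M"
  have h: "N * ?M = card (Y p q r s) * 2" using cnt cS by (simp add: N_def)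
  have "N = (if odd (length s) \<and> odd (sum_list s) then 2 else 0)"
  proof (cases "odd (length s) \<and> odd (sum_list s)")
    case True
    then have "N * ?M = 2 * ?M" using h cY by simp
    then show ?thesis using True by (simp only: mult_cancel_right) simp
  next
    case False
    then have "card (Y p q r s) = 0" using cY by simp
    then have "N * ?M = 0" using h by simp
    then show ?thesis using False by simp
  qed
  then have "num_orbits_of_length ?f ?X ?M = (if odd (length s) \<and> odd (sum_list s) then 2 else 0)"
    by (simp add: N_def)
  then show ?thesis using e2 by simp
qed



end
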